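(* Let $M$ be a timelike surface in $\mathbb{R}^{3,1}$ with a canonical null direction with respect to a constant unit spacelike vector $Z$, such that $II(Z^\top,Z^\top)\neq0$ everywhere. Then the normal curvature of $M$ is $$K_N=a\,|II(Z^\top,Z^\top)|.$$
   Context: $\mathbb{R}^{3,1}$ is $\mathbb{R}^{4}$ with the metric $-dx_1^2+dx_2^2+dx_3^2+dx_4^2$. A surface is timelike if the induced metric has signature $(1,1)$ (its normal bundle is then spacelike); a vector $v$ is lightlike if $v\ne0$ and $\langle v,v\rangle=0$. For a constant vector $Z$, $Z=Z^\top+Z^\perp$ along $M$; $M$ has a canonical null direction with respect to $Z$ if $Z^\top$ is lightlike everywhere on $M$. $W$ is the unique lightlike tangent field with $\langle Z^\top,W\rangle=-1$; $a:=\langle II(W,W),Z^\perp\rangle$ with $II$ the second fundamental form; $A_\xi$ is the shape operator, $\langle A_\xi X,Y\rangle=\langle II(X,Y),\xi\rangle$. Set $\nu:=II(Z^\top,Z^\top)/|II(Z^\top,Z^\top)|$ (a unit normal orthogonal to $Z^\perp$), $e_1=(Z^\top+W)/\sqrt2$, $e_2=(Z^\top-W)/\sqrt2$. The normal curvature is defined as $K_N:=\langle (A_{Z^\perp}\circ A_\nu-A_\nu\circ A_{Z^\perp})(e_1),e_2\rangle$. *)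

theory Defs
  imports "HOL-Analysis.Analysis"
begin

definition mink :: "real^4 \<Rightarrow> real^4 \<Rightarrow> real" where
  "mink x y = (\<Sum>i\<in>UNIV. (if i = 1 then -1 else 1) * (x $ i * y $ i))"

definition lightlike :: "real^4 \<Rightarrow> bool" where
  "lightlike v \<longleftrightarrow> v \<noteq> 0 \<and> mink v v = 0"

definition mnorm :: "real^4 \<Rightarrow> real" where
  "mnorm v = sqrt (mink v v)"

text \<open>The 2-jet of a parametrisation f(u,v) at a point: f_u, f_v, f_uu, f_uv, f_vu, f_vv.\<close>
record jet =
  ju :: "real^4"
  jv :: "real^4"
  juu :: "real^4"
  juv :: "real^4"
  jvu :: "real^4"
  jvv :: "real^4"

definition jet_at ::
  "(real\<times>real \<Rightarrow> real^4) \<Rightarrow> (real\<times>real \<Rightarrow> real^4) \<Rightarrow> (real\<times>real \<Rightarrow> real^4) \<Rightarrow>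
   (real\<times>real \<Rightarrow> real^4) \<Rightarrow> (real\<times>real \<Rightarrow> real^4) \<Rightarrow> (real\<times>real \<Rightarrow> real^4) \<Rightarrow> real\<times>real \<Rightarrow> jet" where
  "jet_at fu fv fuu fuv fvu fvv p =
     \<lparr>ju = fu p, jv = fv p, juu = fuu p, juv = fuv p, jvu = fvu p, jvv = fvv p\<rparr>"

definition tspace :: "jet \<Rightarrow> (real^4) set" where
  "tspace J = span {ju J, jv J}"

definition nspace :: "jet \<Rightarrow> (real^4) set" where
  "nspace J = {n. mink n (ju J) = 0 \<and> mink n (jv J) = 0}"

definition timelike_at :: "jet \<Rightarrow> bool" where
  "timelike_at J \<longleftrightarrow> independent {ju J, jv J} \<and> ju J \<noteq> jv J \<and>
     (\<exists>X\<in>tspace J. mink X X < 0) \<and> (\<exists>Y\<in>tspace J. mink Y Y > 0)"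

definition tanpart :: "jet \<Rightarrow> real^4 \<Rightarrow> real^4" where
  "tanpart J x = (THE t. t \<in> tspace J \<and> x - t \<in> nspace J)"

definition norpart :: "jet \<Rightarrow> real^4 \<Rightarrow> real^4" where
  "norpart J x = x - tanpart J x"

definition coords :: "jet \<Rightarrow> real^4 \<Rightarrow> real \<times> real" where
  "coords J X = (THE ab. X = fst ab *\<^sub>R ju J + snd ab *\<^sub>R jv J)"

definition sff :: "jet \<Rightarrow> real^4 \<Rightarrow> real^4 \<Rightarrow> real^4" where
  "sff J X Y = (let (a, b) = coords J X; (c, d) = coords J Y in
     norpart J ((a * c) *\<^sub>R juu J + (a * d) *\<^sub>R juv J + (b * c) *\<^sub>R jvu J + (b * d) *\<^sub>R jvv J))"

definition shape :: "jet \<Rightarrow> real^4 \<Rightarrow> real^4 \<Rightarrow> real^4" where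
  "shape J xi X = (THE t. t \<in> tspace J \<and> (\<forall>Y\<in>tspace J. mink t Y = mink (sff J X Y) xi))"

definition ZT :: "jet \<Rightarrow> real^4 \<Rightarrow> real^4" where
  "ZT J Z = tanpart J Z"

definition ZN :: "jet \<Rightarrow> real^4 \<Rightarrow> real^4" where
  "ZN J Z = norpart J Z"

definition Wvec :: "jet \<Rightarrow> real^4 \<Rightarrow> real^4" where
  "Wvec J Z = (THE w. w \<in> tspace J \<and> lightlike w \<and> mink (ZT J Z) w = -1)"

definition acoef :: "jet \<Rightarrow> real^4 \<Rightarrow> real" where
  "acoef J Z = mink (sff J (Wvec J Z) (Wvec J Z)) (ZN J Z)"

definition nuvec :: "jet \<Rightarrow> real^4 \<Rightarrow> real^4" where
  "nuvec J Z = (1 / mnorm (sff J (ZT J Z) (ZT J Z))) *\<^sub>R sff J (ZT J Z) (ZT J Z)"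

definition e1vec :: "jet \<Rightarrow> real^4 \<Rightarrow> real^4" where
  "e1vec J Z = (1 / sqrt 2) *\<^sub>R (ZT J Z + Wvec J Z)"

definition e2vec :: "jet \<Rightarrow> real^4 \<Rightarrow> real^4" where
  "e2vec J Z = (1 / sqrt 2) *\<^sub>R (ZT J Z - Wvec J Z)"

definition normal_curvature :: "jet \<Rightarrow> real^4 \<Rightarrow> real" where
  "normal_curvature J Z = mink
     (shape J (ZN J Z) (shape J (nuvec J Z) (e1vec J Z))
      - shape J (nuvec J Z) (shape J (ZN J Z) (e1vec J Z)))
     (e2vec J Z)"

end

theory Submission imports Defs begin

lemma mink_expand: "mink x y = - (x$1*y$1) + x$2*y$2 + x$3*y$3 + x$4*y$4"
  unfolding mink_def sum_4 by simp

lemma mink_sym: "mink x y = mink y x"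
  unfolding mink_expand by (simp add: mult.commute)
lemma mink_add_left: "mink (x + z) y = mink x y + mink z y"
  unfolding mink_expand by (simp add: algebra_simps)
lemma mink_add_right: "mink y (x + z) = mink y x + mink y z"
  unfolding mink_expand by (simp add: algebra_simps)
lemma mink_diff_left: "mink (x - z) y = mink x y - mink z y"
  unfolding mink_expand by (simp add: algebra_simps)
lemma mink_diff_right: "mink y (x - z) = mink y x - mink y z"
  unfolding mink_expand by (simp add: algebra_simps)
lemma mink_scale_left: "mink (c *\<^sub>R x) y = c * mink x y"
  unfolding mink_expand by (simp add: algebra_simps)
lemma mink_scale_right: "mink y (c *\<^sub>R x) = c * mink y x"
  unfolding mink_expand by (simp add: algebra_simps)
lemma mink_zero_left[simp]: "mink 0 y = 0" unfolding mink_expand by simp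
lemma mink_zero_right[simp]: "mink y 0 = 0" unfolding mink_expand by simp
lemma mink_neg_left: "mink (- x) y = - mink x y" unfolding mink_expand by simp
lemma mink_neg_right: "mink y (- x) = - mink y x" unfolding mink_expand by simp

lemmas mink_lin = mink_add_left mink_add_right mink_diff_left mink_diff_right
  mink_scale_left mink_scale_right mink_neg_left mink_neg_right

lemma cs3: "((a::real)*x+b*y+c*z)^2 \<le> (a^2+b^2+c^2)*(x^2+y^2+z^2)"
proof -
  have "(a^2+b^2+c^2)*(x^2+y^2+z^2) - (a*x+b*y+c*z)^2 = (a*y-b*x)^2+(a*z-c*x)^2+(b*z-c*y)^2"
    by (simp add: power2_eq_square algebra_simps)
  moreover have "(a*y-b*x)^2+(a*z-c*x)^2+(b*z-c*y)^2 \<ge> 0" by simp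
  ultimately show ?thesis by linarith
qed

lemma mink_timelike_orth:
  assumes "mink X X < 0" "mink n X = 0" shows "mink n n \<ge> 0"
proof -
  let ?s = "n$2*X$2 + n$3*X$3 + n$4*X$4"
  have cs: "?s^2 \<le> (n$2^2+n$3^2+n$4^2)*(X$2^2+X$3^2+X$4^2)"
    by (rule cs3)
  have x: "X$2^2+X$3^2+X$4^2 < X$1^2" using assms(1) unfolding mink_expand by (simp add: power2_eq_square)
  have e: "n$1*X$1 = ?s" using assms(2) unfolding mink_expand by simp
  have "(n$1)^2 * X$1^2 \<le> (n$2^2+n$3^2+n$4^2) * X$1^2"
  proof -
    have "(n$1)^2 * X$1^2 = ?s^2" using e by (metis power_mult_distrib)
    also have "\<dots> \<le> (n$2^2+n$3^2+n$4^2)*(X$2^2+X$3^2+X$4^2)" by (rule cs)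
    also have "\<dots> \<le> (n$2^2+n$3^2+n$4^2) * X$1^2"
      using x by (intro mult_left_mono) auto
    finally show ?thesis .
  qed
  moreover have "X$1^2 > 0" using x by (smt (verit) zero_le_power2)
  ultimately have "(n$1)^2 \<le> n$2^2+n$3^2+n$4^2" by simp
  then show ?thesis unfolding mink_expand by (simp add: power2_eq_square)
qed

lemma strip_mvt:
  fixes f :: "'b::real_normed_vector \<Rightarrow> 'a::real_inner"
  assumes s: "0 < s"
    and df: "\<And>q. q \<in> U \<Longrightarrow> (f has_derivative F q) (at q)"
    and inU: "\<And>t. t \<in> {0..s} \<Longrightarrow> x + t *\<^sub>R w + y \<in> U \<and> x + t *\<^sub>R w \<in> U"
    and bnd: "\<And>t. t \<in> {0<..<s} \<Longrightarrow> norm (F (x + t *\<^sub>R w + y) w - F (x + t *\<^sub>R w) w - K) \<le> B"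
  shows "norm (f (x + s *\<^sub>R w + y) - f (x + s *\<^sub>R w) - f (x + y) + f x - s *\<^sub>R K) \<le> s * B"
proof -
  define g where "g t = f (x + t *\<^sub>R w + y) - f (x + t *\<^sub>R w) - t *\<^sub>R K" for t
  have der: "(g has_derivative (\<lambda>h. h *\<^sub>R (F (x + t *\<^sub>R w + y) w - F (x + t *\<^sub>R w) w - K))) (at t)"
    if t: "t \<in> {0..s}" for t
  proof -
    have d1: "(f has_derivative F (x + t *\<^sub>R w + y)) (at (x + t *\<^sub>R w + y))" using df inU[OF t] by blast
    have d2: "(f has_derivative F (x + t *\<^sub>R w)) (at (x + t *\<^sub>R w))" using df inU[OF t] by blast
    have l1: "linear (F (x + t *\<^sub>R w + y))" using d1 has_derivative_bounded_linear bounded_linear.linear by blast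
    have l2: "linear (F (x + t *\<^sub>R w))" using d2 has_derivative_bounded_linear bounded_linear.linear by blast
    have a1: "((\<lambda>t. x + t *\<^sub>R w + y) has_derivative (\<lambda>h. h *\<^sub>R w)) (at t)"
      by (auto intro!: derivative_eq_intros)
    have a2: "((\<lambda>t. x + t *\<^sub>R w) has_derivative (\<lambda>h. h *\<^sub>R w)) (at t)"
      by (auto intro!: derivative_eq_intros)
    have c1: "((\<lambda>t. f (x + t *\<^sub>R w + y)) has_derivative (\<lambda>h. F (x + t *\<^sub>R w + y) (h *\<^sub>R w))) (at t)"
      using has_derivative_compose[OF a1 d1] by (simp add: o_def)
    have c2: "((\<lambda>t. f (x + t *\<^sub>R w)) has_derivative (\<lambda>h. F (x + t *\<^sub>R w) (h *\<^sub>R w))) (at t)"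
      using has_derivative_compose[OF a2 d2] by (simp add: o_def)
    have c3: "((\<lambda>t. t *\<^sub>R K) has_derivative (\<lambda>h. h *\<^sub>R K)) (at t)"
      by (auto intro!: derivative_eq_intros)
    have "(g has_derivative (\<lambda>h. F (x + t *\<^sub>R w + y) (h *\<^sub>R w) - F (x + t *\<^sub>R w) (h *\<^sub>R w) - h *\<^sub>R K)) (at t)"
      unfolding g_def by (intro has_derivative_diff c1 c2 c3)
    moreover have "(\<lambda>h. F (x + t *\<^sub>R w + y) (h *\<^sub>R w) - F (x + t *\<^sub>R w) (h *\<^sub>R w) - h *\<^sub>R K)
       = (\<lambda>h. h *\<^sub>R (F (x + t *\<^sub>R w + y) w - F (x + t *\<^sub>R w) w - K))"
      using linear_scale[OF l1] linear_scale[OF l2] by (simp add: algebra_simps)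
    ultimately show ?thesis by simp
  qed
  have cont: "continuous_on {0..s} g"
    using der by (intro continuous_at_imp_continuous_on) (meson has_derivative_continuous)
  obtain t where t: "t \<in> {0<..<s}" and
    le: "norm (g s - g 0) \<le> norm ((s - 0) *\<^sub>R (F (x + t *\<^sub>R w + y) w - F (x + t *\<^sub>R w) w - K))"
    using mvt_general[OF s cont, of "\<lambda>t h. h *\<^sub>R (F (x + t *\<^sub>R w + y) w - F (x + t *\<^sub>R w) w - K)"] der
    by auto
  have "norm ((s - 0) *\<^sub>R (F (x + t *\<^sub>R w + y) w - F (x + t *\<^sub>R w) w - K)) \<le> s * B"
    using bnd[OF t] s by simp
  moreover have "g s - g 0 = f (x + s *\<^sub>R w + y) - f (x + s *\<^sub>R w) - f (x + y) + f x - s *\<^sub>R K"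
    unfolding g_def by (simp add: algebra_simps)
  ultimately show ?thesis using le by simp
qed

lemma clairaut:
  fixes f fu fv :: "real \<times> real \<Rightarrow> 'a::real_inner"
  assumes U: "open U" "p \<in> U"
   and df: "\<forall>q\<in>U. (f has_derivative (\<lambda>h. fst h *\<^sub>R fu q + snd h *\<^sub>R fv q)) (at q)"
   and du: "(fu has_derivative (\<lambda>h. fst h *\<^sub>R a + snd h *\<^sub>R b)) (at p)"
   and dv: "(fv has_derivative (\<lambda>h. fst h *\<^sub>R c + snd h *\<^sub>R d)) (at p)"
  shows "b = c"
proof (rule ccontr)
  assume ne: "b \<noteq> c"
  define e where "e = norm (b - c) / 10"
  have e: "e > 0" using ne by (simp add: e_def)
  obtain d1 where d1: "d1 > 0" "\<forall>y. norm (y - p) < d1 \<longrightarrow>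
      norm (fu y - fu p - (fst (y-p) *\<^sub>R a + snd (y-p) *\<^sub>R b)) \<le> e * norm (y - p)"
    using du[unfolded has_derivative_at_alt] e by blast
  obtain d2 where d2: "d2 > 0" "\<forall>y. norm (y - p) < d2 \<longrightarrow>
      norm (fv y - fv p - (fst (y-p) *\<^sub>R c + snd (y-p) *\<^sub>R d)) \<le> e * norm (y - p)"
    using dv[unfolded has_derivative_at_alt] e by blast
  obtain r where r: "r > 0" "ball p r \<subseteq> U" using U open_contains_ball by blast
  define s where "s = min (min d1 d2) r / 3"
  have s: "s > 0" "2* s < d1" "2* s < d2" "2* s < r" using d1 d2 r by (auto simp: s_def)
  have nrm: "norm ((t1, t2)::real\<times>real) \<le> 2* s" if "\<bar>t1\<bar> \<le> s" "\<bar>t2\<bar> \<le> s" for t1 t2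
    using norm_Pair_le[of t1 t2] that by simp
  have inU: "p + (t1, t2) \<in> U" if "\<bar>t1\<bar> \<le> s" "\<bar>t2\<bar> \<le> s" for t1 t2
  proof -
    have "dist p (p + (t1,t2)) = norm ((t1,t2)::real\<times>real)" by (simp add: dist_norm norm_Pair)
    then have "dist p (p + (t1,t2)) < r" using nrm[OF that] s by simp
    then show ?thesis using r by auto
  qed
  define F where "F q = (\<lambda>h::real\<times>real. fst h *\<^sub>R fu q + snd h *\<^sub>R fv q)" for q
  have dF: "\<And>q. q \<in> U \<Longrightarrow> (f has_derivative F q) (at q)" using df by (simp add: F_def)
  have b1: "norm (fu (p + (t1,t2)) - fu p - (t1 *\<^sub>R a + t2 *\<^sub>R b)) \<le> e * (2 * s)"
    if "\<bar>t1\<bar> \<le> s" "\<bar>t2\<bar> \<le> s" for t1 t2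
  proof -
    have "norm (p + (t1,t2) - p) < d1" using nrm[OF that] s by simp
    then have "norm (fu (p + (t1,t2)) - fu p - (t1 *\<^sub>R a + t2 *\<^sub>R b)) \<le> e * norm ((t1,t2)::real\<times>real)"
      using d1(2) by fastforce
    also have "\<dots> \<le> e * (2 * s)" using nrm[OF that] e by (intro mult_left_mono) auto
    finally show ?thesis .
  qed
  have b2: "norm (fv (p + (t1,t2)) - fv p - (t1 *\<^sub>R c + t2 *\<^sub>R d)) \<le> e * (2 * s)"
    if "\<bar>t1\<bar> \<le> s" "\<bar>t2\<bar> \<le> s" for t1 t2
  proof -
    have "norm (p + (t1,t2) - p) < d2" using nrm[OF that] s by simp
    then have "norm (fv (p + (t1,t2)) - fv p - (t1 *\<^sub>R c + t2 *\<^sub>R d)) \<le> e * norm ((t1,t2)::real\<times>real)"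
      using d2(2) by fastforce
    also have "\<dots> \<le> e * (2 * s)" using nrm[OF that] e by (intro mult_left_mono) auto
    finally show ?thesis .
  qed
  have S1: "norm (f (p + s *\<^sub>R (1,0) + (0,s)) - f (p + s *\<^sub>R (1,0)) - f (p + (0,s)) + f p - s *\<^sub>R (s *\<^sub>R b)) \<le> s * (4*e* s)"
  proof (rule strip_mvt[OF s(1) dF])
    fix t assume t: "t \<in> {0..s}"
    then show "p + t *\<^sub>R (1, 0) + (0, s) \<in> U \<and> p + t *\<^sub>R (1, 0) \<in> U"
      using inU[of t s] inU[of t 0] s by (auto simp: add.assoc)
  next
    fix t assume t: "t \<in> {0<..<s}"
    have "fu (p + (t,s)) - fu (p + (t,0)) - s *\<^sub>R b
        = (fu (p + (t,s)) - fu p - (t *\<^sub>R a + s *\<^sub>R b)) - (fu (p + (t,0)) - fu p - (t *\<^sub>R a + 0 *\<^sub>R b))"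
      by (simp add: algebra_simps)
    also have "norm \<dots> \<le> e*(2 * s) + e*(2 * s)"
      using norm_triangle_ineq4 b1[of t s] b1[of t 0] t s by (smt (verit) greaterThanLessThan_iff abs_of_pos)
    finally show "norm (F (p + t *\<^sub>R (1, 0) + (0, s)) (1, 0) - F (p + t *\<^sub>R (1, 0)) (1, 0) - s *\<^sub>R b) \<le> 4 * e * s"
      by (simp add: F_def add.assoc)
  qed
  have S2: "norm (f (p + s *\<^sub>R (0,1) + (s,0)) - f (p + s *\<^sub>R (0,1)) - f (p + (s,0)) + f p - s *\<^sub>R (s *\<^sub>R c)) \<le> s * (4*e* s)"
  proof (rule strip_mvt[OF s(1) dF])
    fix t assume t: "t \<in> {0..s}"
    then show "p + t *\<^sub>R (0, 1) + (s, 0) \<in> U \<and> p + t *\<^sub>R (0, 1) \<in> U"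
      using inU[of s t] inU[of 0 t] s by (auto simp: add.assoc)
  next
    fix t assume t: "t \<in> {0<..<s}"
    have "fv (p + (s,t)) - fv (p + (0,t)) - s *\<^sub>R c
        = (fv (p + (s,t)) - fv p - (s *\<^sub>R c + t *\<^sub>R d)) - (fv (p + (0,t)) - fv p - (0 *\<^sub>R c + t *\<^sub>R d))"
      by (simp add: algebra_simps)
    also have "norm \<dots> \<le> e*(2 * s) + e*(2 * s)"
      using norm_triangle_ineq4 b2[of s t] b2[of 0 t] t s by (smt (verit) greaterThanLessThan_iff abs_of_pos)
    finally show "norm (F (p + t *\<^sub>R (0, 1) + (s, 0)) (0, 1) - F (p + t *\<^sub>R (0, 1)) (0, 1) - s *\<^sub>R c) \<le> 4 * e * s"
      by (simp add: F_def add.assoc)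
  qed
  define \<Delta> where "\<Delta> = f (p + (s,s)) - f (p + (s,0)) - f (p + (0,s)) + f p"
  have S1': "norm (\<Delta> - (s* s) *\<^sub>R b) \<le> s * (4*e* s)" using S1 by (simp add: \<Delta>_def add.assoc)
  have S2': "norm (\<Delta> - (s* s) *\<^sub>R c) \<le> s * (4*e* s)" using S2 by (simp add: \<Delta>_def add.assoc algebra_simps)
  have "(s* s) *\<^sub>R (b - c) = (\<Delta> - (s* s) *\<^sub>R c) - (\<Delta> - (s* s) *\<^sub>R b)" by (simp add: algebra_simps)
  then have "norm ((s* s) *\<^sub>R (b - c)) \<le> norm (\<Delta> - (s* s) *\<^sub>R c) + norm (\<Delta> - (s* s) *\<^sub>R b)"
    using norm_triangle_ineq4[of "\<Delta> - (s* s) *\<^sub>R c" "\<Delta> - (s* s) *\<^sub>R b"] by metis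
  then have "norm ((s* s) *\<^sub>R (b - c)) \<le> s * (4*e* s) + s * (4*e* s)"
    using S1' S2' by linarith
  then have "(s* s) * norm (b - c) \<le> (s* s) * (8*e)" using s by (simp add: algebra_simps del: scaleR_right_diff_distrib)
  then have "norm (b - c) \<le> 8 * e" using s by simp
  then show False using e unfolding e_def by simp
qed

locale tj =
  fixes J :: jet
  assumes tl: "timelike_at J"
begin

abbreviation "u \<equiv> ju J"
abbreviation "v \<equiv> jv J"
abbreviation "gA \<equiv> mink u u"
abbreviation "gB \<equiv> mink u v"
abbreviation "gC \<equiv> mink v v"

lemma tspace_iff: "X \<in> tspace J \<longleftrightarrow> (\<exists>a b. X = a *\<^sub>R u + b *\<^sub>R v)"
proof
  assume "X \<in> tspace J"
  then obtain k where "X - k *\<^sub>R u \<in> span {v}" unfolding tspace_def span_insert by auto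
  then obtain j where "X - k *\<^sub>R u = j *\<^sub>R v" unfolding span_singleton by auto
  then have "X = k *\<^sub>R u + j *\<^sub>R v" by (simp add: algebra_simps)
  then show "\<exists>a b. X = a *\<^sub>R u + b *\<^sub>R v" by blast
next
  assume "\<exists>a b. X = a *\<^sub>R u + b *\<^sub>R v"
  then obtain a b where "X = a *\<^sub>R u + b *\<^sub>R v" by blast
  then show "X \<in> tspace J" unfolding tspace_def
    by (simp add: span_add span_scale span_base)
qed

lemma tspace_add: "X \<in> tspace J \<Longrightarrow> Y \<in> tspace J \<Longrightarrow> X + Y \<in> tspace J"
  unfolding tspace_def by (rule span_add)
lemma tspace_diff: "X \<in> tspace J \<Longrightarrow> Y \<in> tspace J \<Longrightarrow> X - Y \<in> tspace J"
  unfolding tspace_def by (rule span_diff)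
lemma tspace_scale: "X \<in> tspace J \<Longrightarrow> c *\<^sub>R X \<in> tspace J"
  unfolding tspace_def by (rule span_scale)
lemma tspace_u: "u \<in> tspace J" and tspace_v: "v \<in> tspace J"
  unfolding tspace_def by (auto intro: span_base)
lemma tspace_0: "0 \<in> tspace J" unfolding tspace_def by (rule span_zero)

lemma quad: "mink (a *\<^sub>R u + b *\<^sub>R v) (a *\<^sub>R u + b *\<^sub>R v) = a*a*gA + 2*a*b*gB + b*b*gC"
  by (simp add: mink_lin mink_sym[of v u] algebra_simps)

lemma Dneg: "gA * gC - gB^2 < 0"
proof (rule ccontr)
  assume "\<not> ?thesis"
  then have D: "gA * gC - gB^2 \<ge> 0" by simp
  obtain X where X: "X \<in> tspace J" "mink X X < 0" using tl unfolding timelike_at_def by blast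
  obtain Y where Y: "Y \<in> tspace J" "mink Y Y > 0" using tl unfolding timelike_at_def by blast
  obtain a b where ab: "X = a *\<^sub>R u + b *\<^sub>R v" using X tspace_iff by blast
  obtain c d where cd: "Y = c *\<^sub>R u + d *\<^sub>R v" using Y tspace_iff by blast
  have q1: "a*a*gA + 2*a*b*gB + b*b*gC < 0" using X ab quad by simp
  have q2: "c*c*gA + 2*c*d*gB + d*d*gC > 0" using Y cd quad by simp
  have i1: "gA * (a*a*gA + 2*a*b*gB + b*b*gC) = (gA*a + gB*b)^2 + (gA*gC - gB^2)*b^2"
    by (simp add: power2_eq_square algebra_simps)
  have i2: "gA * (c*c*gA + 2*c*d*gB + d*d*gC) = (gA*c + gB*d)^2 + (gA*gC - gB^2)*d^2"
    by (simp add: power2_eq_square algebra_simps)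
  have nn1: "(gA*a + gB*b)^2 + (gA*gC - gB^2)*b^2 \<ge> 0" using D by simp
  have nn2: "(gA*c + gB*d)^2 + (gA*gC - gB^2)*d^2 \<ge> 0" using D by simp
  show False
  proof (cases "gA = 0")
    case True
    then have "gB = 0" using D by simp
    then show ?thesis using q1 q2 True
      by (smt (verit) mult_nonneg_nonpos mult_nonneg_nonneg zero_le_square mult_nonpos_nonpos
          mult_nonneg_nonpos2 zero_le_mult_iff)
  next
    case False
    then show ?thesis using q1 q2 i1 i2 nn1 nn2
      by (smt (verit) mult_pos_neg mult_neg_pos mult_pos_pos mult_neg_neg)
  qed
qed

lemma Dnz: "gA * gC - gB^2 \<noteq> 0" using Dneg by simp

lemma coef_zero:
  assumes "a * gA + b * gB = 0" "a * gB + b * gC = 0" shows "a = 0 \<and> b = 0"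
proof -
  have "a * (gA * gC - gB^2) = gC * (a * gA + b * gB) - gB * (a * gB + b * gC)"
    by (simp add: power2_eq_square algebra_simps)
  then have "a * (gA * gC - gB^2) = 0" using assms by simp
  then have a: "a = 0" using Dnz by simp
  have "b * (gA * gC - gB^2) = gA * (a * gB + b * gC) - gB * (a * gA + b * gB)"
    by (simp add: power2_eq_square algebra_simps)
  then have "b * (gA * gC - gB^2) = 0" using assms by simp
  then have "b = 0" using Dnz by simp
  with a show ?thesis by simp
qed

lemma mink_uv_comb:
  "mink (a *\<^sub>R u + b *\<^sub>R v) u = a * gA + b * gB"
  "mink (a *\<^sub>R u + b *\<^sub>R v) v = a * gB + b * gC"
  by (simp_all add: mink_lin mink_sym[of v u])

lemma orth_zero:
  assumes "X \<in> tspace J" "mink X u = 0" "mink X v = 0" shows "X = 0"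
proof -
  obtain a b where X: "X = a *\<^sub>R u + b *\<^sub>R v" using assms(1) tspace_iff by blast
  have "a = 0 \<and> b = 0" using coef_zero assms(2,3) unfolding X mink_uv_comb by blast
  then show ?thesis using X by simp
qed

lemma orth_all:
  assumes "mink X u = 0" "mink X v = 0" "Y \<in> tspace J" shows "mink X Y = 0"
proof -
  obtain a b where Y: "Y = a *\<^sub>R u + b *\<^sub>R v" using assms(3) tspace_iff by blast
  show ?thesis using assms unfolding Y by (simp add: mink_lin)
qed

lemma coef_unique:
  assumes "a *\<^sub>R u + b *\<^sub>R v = c *\<^sub>R u + d *\<^sub>R v" shows "a = c \<and> b = d"
proof -
  have e: "(a - c) *\<^sub>R u + (b - d) *\<^sub>R v = 0" using assms by (simp add: algebra_simps)
  have 1: "(a - c) * gA + (b - d) * gB = 0" using mink_uv_comb(1)[of "a - c" "b - d"] e by simp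
  have 2: "(a - c) * gB + (b - d) * gC = 0" using mink_uv_comb(2)[of "a - c" "b - d"] e by simp
  have "a - c = 0 \<and> b - d = 0" using coef_zero[OF 1 2] .
  then show ?thesis by simp
qed

lemma riesz: "\<exists>t. t \<in> tspace J \<and> mink t u = r1 \<and> mink t v = r2"
proof -
  define D where "D = gA * gC - gB^2"
  have D: "D \<noteq> 0" using Dnz D_def by simp
  define \<alpha> where "\<alpha> = (gC * r1 - gB * r2) / D"
  define \<beta> where "\<beta> = (gA * r2 - gB * r1) / D"
  have 1: "\<alpha> * gA + \<beta> * gB = r1"
  proof -
    have "\<alpha> * gA + \<beta> * gB = ((gC * r1 - gB * r2) * gA + (gA * r2 - gB * r1) * gB) / D"
      unfolding \<alpha>_def \<beta>_def by (simp add: add_divide_distrib)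
    also have "(gC * r1 - gB * r2) * gA + (gA * r2 - gB * r1) * gB = r1 * D"
      unfolding D_def by (simp add: power2_eq_square algebra_simps)
    finally show ?thesis using D by simp
  qed
  have 2: "\<alpha> * gB + \<beta> * gC = r2"
  proof -
    have "\<alpha> * gB + \<beta> * gC = ((gC * r1 - gB * r2) * gB + (gA * r2 - gB * r1) * gC) / D"
      unfolding \<alpha>_def \<beta>_def by (simp add: add_divide_distrib)
    also have "(gC * r1 - gB * r2) * gB + (gA * r2 - gB * r1) * gC = r2 * D"
      unfolding D_def by (simp add: power2_eq_square algebra_simps)
    finally show ?thesis using D by simp
  qed
  show ?thesis using 1 2 mink_uv_comb[of \<alpha> \<beta>] tspace_iff by blast
qed

lemma riesz_unique:
  assumes "t1 \<in> tspace J" "t2 \<in> tspace J" "mink t1 u = mink t2 u" "mink t1 v = mink t2 v"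
  shows "t1 = t2"
proof -
  have "t1 - t2 = 0" using assms by (intro orth_zero) (simp_all add: tspace_diff mink_lin)
  then show ?thesis by simp
qed

lemma tan_ex1: "\<exists>!t. t \<in> tspace J \<and> x - t \<in> nspace J"
proof -
  obtain t where t: "t \<in> tspace J" "mink t u = mink x u" "mink t v = mink x v" using riesz by blast
  have "x - t \<in> nspace J" using t unfolding nspace_def by (simp add: mink_lin)
  moreover have "t' = t" if "t' \<in> tspace J" "x - t' \<in> nspace J" for t'
    using that t unfolding nspace_def by (intro riesz_unique) (simp_all add: mink_lin)
  ultimately show ?thesis using t by blast
qed

lemma tan_spec: "tanpart J x \<in> tspace J \<and> x - tanpart J x \<in> nspace J"
  unfolding tanpart_def using theI'[OF tan_ex1] .

lemma tan_eq: "t \<in> tspace J \<Longrightarrow> x - t \<in> nspace J \<Longrightarrow> tanpart J x = t"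
  unfolding tanpart_def using the1_equality[OF tan_ex1] by blast

lemma norpart_in: "norpart J x \<in> nspace J"
  using tan_spec unfolding norpart_def by blast

lemma nspace_orth: "\<xi> \<in> nspace J \<Longrightarrow> Y \<in> tspace J \<Longrightarrow> mink \<xi> Y = 0"
  unfolding nspace_def using orth_all by blast

lemma nspace_orth': "\<xi> \<in> nspace J \<Longrightarrow> Y \<in> tspace J \<Longrightarrow> mink Y \<xi> = 0"
  using nspace_orth mink_sym by metis

lemma nspace_scale: "\<xi> \<in> nspace J \<Longrightarrow> c *\<^sub>R \<xi> \<in> nspace J"
  unfolding nspace_def by (simp add: mink_lin)

lemma mink_norpart: "\<xi> \<in> nspace J \<Longrightarrow> mink (norpart J w) \<xi> = mink w \<xi>"
proof -
  assume n: "\<xi> \<in> nspace J"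
  have "mink (tanpart J w) \<xi> = 0" using nspace_orth'[OF n] tan_spec by blast
  then show ?thesis unfolding norpart_def mink_diff_left by simp
qed

lemma normal_spacelike: "\<xi> \<in> nspace J \<Longrightarrow> mink \<xi> \<xi> \<ge> 0"
proof -
  assume n: "\<xi> \<in> nspace J"
  obtain X where X: "X \<in> tspace J" "mink X X < 0" using tl unfolding timelike_at_def by blast
  show ?thesis using mink_timelike_orth[OF X(2)] nspace_orth[OF n X(1)] by blast
qed

lemma coords_eq: "coords J (a *\<^sub>R u + b *\<^sub>R v) = (a, b)"
  unfolding coords_def
proof (rule the1_equality)
  show "\<exists>!ab. a *\<^sub>R u + b *\<^sub>R v = fst ab *\<^sub>R u + snd ab *\<^sub>R v"
  proof (rule ex1I[of _ "(a,b)"])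
    fix ab :: "real \<times> real" assume "a *\<^sub>R u + b *\<^sub>R v = fst ab *\<^sub>R u + snd ab *\<^sub>R v"
    then show "ab = (a, b)" using coef_unique by (metis prod.collapse)
  qed simp
qed simp

lemma sff_formula: "sff J (a *\<^sub>R u + b *\<^sub>R v) (c *\<^sub>R u + d *\<^sub>R v) =
   norpart J ((a * c) *\<^sub>R juu J + (a * d) *\<^sub>R juv J + (b * c) *\<^sub>R jvu J + (b * d) *\<^sub>R jvv J)"
  unfolding sff_def coords_eq by simp

definition hh :: "real^4 \<Rightarrow> real^4 \<Rightarrow> real^4 \<Rightarrow> real" where
  "hh \<xi> X Y = mink (sff J X Y) \<xi>"

lemma hh_formula: "\<xi> \<in> nspace J \<Longrightarrow> hh \<xi> (a *\<^sub>R u + b *\<^sub>R v) (c *\<^sub>R u + d *\<^sub>R v) =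
   a * c * mink (juu J) \<xi> + a * d * mink (juv J) \<xi> + b * c * mink (jvu J) \<xi> + b * d * mink (jvv J) \<xi>"
  unfolding hh_def sff_formula by (simp add: mink_norpart mink_add_left mink_scale_left)

lemma comb_add: "(a *\<^sub>R u + b *\<^sub>R v) + (c *\<^sub>R u + d *\<^sub>R v) = (a + c) *\<^sub>R u + (b + d) *\<^sub>R v"
  by (simp add: algebra_simps)
lemma comb_scale: "k *\<^sub>R (a *\<^sub>R u + b *\<^sub>R v) = (k * a) *\<^sub>R u + (k * b) *\<^sub>R v"
  by (simp add: algebra_simps)

lemma hh_add1:
  assumes n: "\<xi> \<in> nspace J" and "X \<in> tspace J" "Y \<in> tspace J" "Z \<in> tspace J"
  shows "hh \<xi> (X + Y) Z = hh \<xi> X Z + hh \<xi> Y Z"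
proof -
  obtain a b where X: "X = a *\<^sub>R u + b *\<^sub>R v" using assms tspace_iff by blast
  obtain a' b' where Y: "Y = a' *\<^sub>R u + b' *\<^sub>R v" using assms tspace_iff by blast
  obtain c d where Z: "Z = c *\<^sub>R u + d *\<^sub>R v" using assms tspace_iff by blast
  show ?thesis unfolding X Y Z comb_add hh_formula[OF n] by (simp add: algebra_simps)
qed

lemma hh_add2:
  assumes n: "\<xi> \<in> nspace J" and "X \<in> tspace J" "Y \<in> tspace J" "Z \<in> tspace J"
  shows "hh \<xi> Z (X + Y) = hh \<xi> Z X + hh \<xi> Z Y"
proof -
  obtain a b where X: "X = a *\<^sub>R u + b *\<^sub>R v" using assms tspace_iff by blast
  obtain a' b' where Y: "Y = a' *\<^sub>R u + b' *\<^sub>R v" using assms tspace_iff by blast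
  obtain c d where Z: "Z = c *\<^sub>R u + d *\<^sub>R v" using assms tspace_iff by blast
  show ?thesis unfolding X Y Z comb_add hh_formula[OF n] by (simp add: algebra_simps)
qed

lemma hh_scale1:
  assumes n: "\<xi> \<in> nspace J" and "X \<in> tspace J" "Z \<in> tspace J"
  shows "hh \<xi> (k *\<^sub>R X) Z = k * hh \<xi> X Z"
proof -
  obtain a b where X: "X = a *\<^sub>R u + b *\<^sub>R v" using assms tspace_iff by blast
  obtain c d where Z: "Z = c *\<^sub>R u + d *\<^sub>R v" using assms tspace_iff by blast
  show ?thesis unfolding X Z comb_scale hh_formula[OF n] by (simp add: algebra_simps)
qed

lemma hh_scale2:
  assumes n: "\<xi> \<in> nspace J" and "X \<in> tspace J" "Z \<in> tspace J"
  shows "hh \<xi> Z (k *\<^sub>R X) = k * hh \<xi> Z X"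
proof -
  obtain a b where X: "X = a *\<^sub>R u + b *\<^sub>R v" using assms tspace_iff by blast
  obtain c d where Z: "Z = c *\<^sub>R u + d *\<^sub>R v" using assms tspace_iff by blast
  show ?thesis unfolding X Z comb_scale hh_formula[OF n] by (simp add: algebra_simps)
qed

lemma hh_sym:
  assumes n: "\<xi> \<in> nspace J" and "X \<in> tspace J" "Z \<in> tspace J" and s: "juv J = jvu J"
  shows "hh \<xi> X Z = hh \<xi> Z X"
proof -
  obtain a b where X: "X = a *\<^sub>R u + b *\<^sub>R v" using assms tspace_iff by blast
  obtain c d where Z: "Z = c *\<^sub>R u + d *\<^sub>R v" using assms tspace_iff by blast
  show ?thesis unfolding X Z hh_formula[OF n] s by (simp add: algebra_simps)
qed

lemma shape_ex1:
  assumes n: "\<xi> \<in> nspace J" and X: "X \<in> tspace J"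
  shows "\<exists>!t. t \<in> tspace J \<and> (\<forall>Y\<in>tspace J. mink t Y = mink (sff J X Y) \<xi>)"
proof -
  obtain t where t: "t \<in> tspace J" "mink t u = hh \<xi> X u" "mink t v = hh \<xi> X v"
    using riesz by blast
  have all: "\<forall>Y\<in>tspace J. mink t Y = mink (sff J X Y) \<xi>"
  proof
    fix Y assume Y: "Y \<in> tspace J"
    obtain c d where Yc: "Y = c *\<^sub>R u + d *\<^sub>R v" using Y tspace_iff by blast
    have "hh \<xi> X Y = c * hh \<xi> X u + d * hh \<xi> X v"
      unfolding Yc using hh_add2[OF n tspace_scale[OF tspace_u] tspace_scale[OF tspace_v] X]
        hh_scale2[OF n tspace_u X] hh_scale2[OF n tspace_v X] by simp
    then show "mink t Y = mink (sff J X Y) \<xi>"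
      unfolding hh_def[symmetric] using t(2,3) Yc by (simp add: mink_lin)
  qed
  moreover have "t' = t" if "t' \<in> tspace J" "\<forall>Y\<in>tspace J. mink t' Y = mink (sff J X Y) \<xi>" for t'
    using that all t(1) tspace_u tspace_v by (intro riesz_unique) auto
  ultimately show ?thesis using t(1) by blast
qed

lemma shape_spec:
  assumes n: "\<xi> \<in> nspace J" and X: "X \<in> tspace J"
  shows "shape J \<xi> X \<in> tspace J" "\<And>Y. Y \<in> tspace J \<Longrightarrow> mink (shape J \<xi> X) Y = hh \<xi> X Y"
  using theI'[OF shape_ex1[OF n X]] unfolding shape_def[symmetric] hh_def by auto

lemma expansion:
  assumes T: "T \<in> tspace J" and W: "W \<in> tspace J" and TT: "mink T T = 0" and WW: "mink W W = 0"
    and TW: "mink T W = -1" and y: "y \<in> tspace J"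
  shows "y = (- mink y W) *\<^sub>R T + (- mink y T) *\<^sub>R W"
proof -
  obtain t1 t2 where Tc: "T = t1 *\<^sub>R u + t2 *\<^sub>R v" using T tspace_iff by blast
  obtain w1 w2 where Wc: "W = w1 *\<^sub>R u + w2 *\<^sub>R v" using W tspace_iff by blast
  define \<delta> where "\<delta> = t1 * w2 - t2 * w1"
  have WT: "mink W T = -1" using TW mink_sym by metis
  have dv: "t1 *\<^sub>R W - w1 *\<^sub>R T = \<delta> *\<^sub>R v" unfolding Tc Wc \<delta>_def by (simp add: algebra_simps)
  have du: "w2 *\<^sub>R T - t2 *\<^sub>R W = \<delta> *\<^sub>R u" unfolding Tc Wc \<delta>_def by (simp add: algebra_simps)
  have \<delta>: "\<delta> \<noteq> 0"
  proof
    assume "\<delta> = 0"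
    then have "mink (t1 *\<^sub>R W - w1 *\<^sub>R T) T = 0" "mink (w2 *\<^sub>R T - t2 *\<^sub>R W) T = 0"
      using dv du by simp_all
    then have "t1 = 0" "t2 = 0" using TT WT by (simp_all add: mink_lin)
    then have "T = 0" using Tc by simp
    then show False using TW by simp
  qed
  define r where "r = y + mink y W *\<^sub>R T + mink y T *\<^sub>R W"
  have rT: "mink r T = 0" unfolding r_def using TT WT by (simp add: mink_lin)
  have rW: "mink r W = 0" unfolding r_def using WW TW by (simp add: mink_lin)
  have rt: "r \<in> tspace J" unfolding r_def using y T W by (intro tspace_add tspace_scale)
  have "mink r (\<delta> *\<^sub>R u) = 0" unfolding du[symmetric] using rT rW by (simp add: mink_lin)
  then have ru: "mink r u = 0" using \<delta> by (simp add: mink_lin)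
  have "mink r (\<delta> *\<^sub>R v) = 0" unfolding dv[symmetric] using rT rW by (simp add: mink_lin)
  then have rv: "mink r v = 0" using \<delta> by (simp add: mink_lin)
  have r0: "r = 0" using orth_zero[OF rt ru rv] .
  have "y = r - mink y W *\<^sub>R T - mink y T *\<^sub>R W" unfolding r_def by simp
  then show ?thesis using r0 by simp
qed

lemma W_ex1:
  assumes T: "T \<in> tspace J" and lT: "lightlike T"
  shows "\<exists>!w. w \<in> tspace J \<and> lightlike w \<and> mink T w = -1"
proof -
  have TT: "mink T T = 0" and T0: "T \<noteq> 0" using lT unfolding lightlike_def by auto
  have "\<exists>Y\<in>tspace J. mink T Y \<noteq> 0"
  proof (rule ccontr)
    assume "\<not> ?thesis"
    then have "mink T u = 0" "mink T v = 0" using tspace_u tspace_v by auto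
    then show False using orth_zero[OF T] T0 by blast
  qed
  then obtain Y where Y: "Y \<in> tspace J" "mink T Y \<noteq> 0" by blast
  define m where "m = mink T Y"
  define k where "k = - mink Y Y / (2 * m)"
  define w where "w = (-1/m) *\<^sub>R (Y + k *\<^sub>R T)"
  have m: "m \<noteq> 0" using Y m_def by simp
  have YT: "mink Y T = m" using m_def mink_sym by metis
  have "mink (Y + k *\<^sub>R T) (Y + k *\<^sub>R T) = mink Y Y + 2 * k * m"
    using TT YT m_def by (simp add: mink_lin algebra_simps)
  also have "\<dots> = 0" unfolding k_def using m by simp
  finally have W0: "mink (Y + k *\<^sub>R T) (Y + k *\<^sub>R T) = 0" .
  have ww: "mink w w = 0" unfolding w_def mink_scale_left mink_scale_right W0 by simp
  have Tw: "mink T w = -1" unfolding w_def using m TT m_def by (simp add: mink_lin)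
  have w0: "w \<noteq> 0" using Tw by auto
  have wt: "w \<in> tspace J" unfolding w_def using Y T by (intro tspace_scale tspace_add) auto
  have uniq: "w2 = w" if w2: "w2 \<in> tspace J" "lightlike w2" "mink T w2 = -1" for w2
  proof -
    have w2w2: "mink w2 w2 = 0" using w2 unfolding lightlike_def by auto
    have w2T: "mink w2 T = -1" using w2 mink_sym by metis
    define c where "c = mink w2 w"
    have e: "w2 = (- c) *\<^sub>R T + w"
      using expansion[OF T wt TT ww Tw w2(1)] w2T unfolding c_def by simp
    have "mink w2 w2 = 2 * c"
      unfolding e using TT Tw ww mink_sym[of w T] by (simp add: mink_lin)
    then have "c = 0" using w2w2 by simp
    then show ?thesis using e by simp
  qed
  show ?thesis using wt ww w0 Tw uniq unfolding lightlike_def by blast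
qed

lemma sff_in: "sff J X Y \<in> nspace J"
  unfolding sff_def by (simp add: norpart_in split: prod.splits)

lemma hh_TW:
  assumes n: "\<xi> \<in> nspace J" and T: "T \<in> tspace J" and W: "W \<in> tspace J"
  shows "hh \<xi> (p *\<^sub>R T + q *\<^sub>R W) (r *\<^sub>R T + s *\<^sub>R W) =
    p*r*hh \<xi> T T + p * s * hh \<xi> T W + q*r*hh \<xi> W T + q * s * hh \<xi> W W"
proof -
  have pT: "p *\<^sub>R T \<in> tspace J" "q *\<^sub>R W \<in> tspace J" "r *\<^sub>R T \<in> tspace J" "s *\<^sub>R W \<in> tspace J"
    using T W tspace_scale by auto
  have sums: "p *\<^sub>R T + q *\<^sub>R W \<in> tspace J" using pT tspace_add by auto
  show ?thesis
    using pT T W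
    by (simp add: hh_add1[OF n pT(1) pT(2) tspace_add[OF pT(3) pT(4)]]
        hh_add2[OF n pT(3) pT(4)] hh_scale1[OF n] hh_scale2[OF n] algebra_simps)
qed

lemma pointwise:
  assumes lT: "lightlike (ZT J Z)" and sym: "juv J = jvu J"
    and dc: "\<And>Y. Y \<in> tspace J \<Longrightarrow> hh (ZN J Z) (ZT J Z) Y = 0"
  shows "normal_curvature J Z = acoef J Z * mnorm (sff J (ZT J Z) (ZT J Z))"
proof -
  define T where "T = ZT J Z"
  define N where "N = ZN J Z"
  have T: "T \<in> tspace J" unfolding T_def ZT_def using tan_spec by blast
  have N: "N \<in> nspace J" unfolding N_def ZN_def by (rule norpart_in)
  have lT': "lightlike T" using lT T_def by simp
  have TT: "mink T T = 0" using lT' unfolding lightlike_def by simp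
  define W where "W = Wvec J Z"
  have Wspec: "W \<in> tspace J \<and> lightlike W \<and> mink T W = -1"
    unfolding W_def Wvec_def T_def[symmetric] using theI'[OF W_ex1[OF T lT']] .
  have W: "W \<in> tspace J" and WW: "mink W W = 0" and TW: "mink T W = -1"
    using Wspec unfolding lightlike_def by auto
  define II where "II = sff J T T"
  define m where "m = mnorm II"
  define \<nu> where "\<nu> = nuvec J Z"
  have \<nu>def: "\<nu> = (1 / m) *\<^sub>R II" unfolding \<nu>_def nuvec_def m_def II_def T_def by simp
  have IIn: "II \<in> nspace J" unfolding II_def by (rule sff_in)
  have \<nu>n: "\<nu> \<in> nspace J" unfolding \<nu>def using IIn nspace_scale by blast
  have IIpos: "mink II II \<ge> 0" using normal_spacelike[OF IIn] .
  have msq: "m * m = mink II II" unfolding m_def mnorm_def using IIpos by simp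
  define b where "b = hh \<nu> T T"
  have bm: "b = m"
  proof -
    have "b = (1/m) * mink II II" unfolding b_def hh_def \<nu>def II_def[symmetric]
      by (simp add: mink_lin)
    also have "\<dots> = m" using msq by (cases "m = 0") (simp_all add: field_simps)
    finally show ?thesis .
  qed
  define a where "a = hh N W W"
  have aa: "acoef J Z = a" unfolding a_def acoef_def hh_def W_def N_def ..
  define c where "c = hh \<nu> T W"
  define d where "d = hh \<nu> W W"
  have hNT: "hh N T Y = 0" if "Y \<in> tspace J" for Y using dc[OF that] unfolding N_def T_def .
  have hNTT: "hh N T T = 0" and hNTW: "hh N T W = 0" using hNT T W by auto
  have hNWT: "hh N W T = 0" using hh_sym[OF N W T sym] hNTW by simp
  have hnWT: "hh \<nu> W T = c" using hh_sym[OF \<nu>n W T sym] c_def by simp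
  define k :: real where "k = 1 / sqrt 2"
  have kk: "k * k = 1/2" unfolding k_def by (simp add: field_simps)
  have e1: "e1vec J Z = k *\<^sub>R T + k *\<^sub>R W" unfolding e1vec_def k_def T_def W_def
    by (simp add: scaleR_right_distrib)
  have e2: "e2vec J Z = k *\<^sub>R T + (-k) *\<^sub>R W" unfolding e2vec_def k_def T_def W_def
    by (simp add: scaleR_right_diff_distrib)
  define E1 where "E1 = k *\<^sub>R T + k *\<^sub>R W"
  define E2 where "E2 = k *\<^sub>R T + (-k) *\<^sub>R W"
  have E1t: "E1 \<in> tspace J" unfolding E1_def using T W by (intro tspace_add tspace_scale)
  have E2t: "E2 \<in> tspace J" unfolding E2_def using T W by (intro tspace_add tspace_scale)
  have W01: "W = 0 *\<^sub>R T + 1 *\<^sub>R W" by simp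
  have T10: "T = 1 *\<^sub>R T + 0 *\<^sub>R W" by simp
  have hh_E1W: "hh \<xi> E1 W = k * hh \<xi> T W + k * hh \<xi> W W" if "\<xi> \<in> nspace J" for \<xi>
    using hh_TW[OF that T W, of k k 0 1] unfolding E1_def W01[symmetric] by simp
  have hh_E1T: "hh \<xi> E1 T = k * hh \<xi> T T + k * hh \<xi> W T" if "\<xi> \<in> nspace J" for \<xi>
    using hh_TW[OF that T W, of k k 1 0] unfolding E1_def T10[symmetric] by simp
  define SN where "SN = shape J N E1"
  have SNt: "SN \<in> tspace J" unfolding SN_def using shape_spec(1)[OF N E1t] .
  have SNexp: "SN = (- (k * a)) *\<^sub>R T + (- 0) *\<^sub>R W"
  proof -
    have "SN = (- mink SN W) *\<^sub>R T + (- mink SN T) *\<^sub>R W" by (rule expansion[OF T W TT WW TW SNt])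
    also have "mink SN W = k * a" unfolding SN_def shape_spec(2)[OF N E1t W] hh_E1W[OF N] hNTW a_def by simp
    also have "mink SN T = 0" unfolding SN_def shape_spec(2)[OF N E1t T] hh_E1T[OF N] hNTT hNWT by simp
    finally show ?thesis .
  qed
  define Sn where "Sn = shape J \<nu> E1"
  have Snt: "Sn \<in> tspace J" unfolding Sn_def using shape_spec(1)[OF \<nu>n E1t] .
  have Snexp: "Sn = (- (k * c + k * d)) *\<^sub>R T + (- (k * b + k * c)) *\<^sub>R W"
  proof -
    have "Sn = (- mink Sn W) *\<^sub>R T + (- mink Sn T) *\<^sub>R W" by (rule expansion[OF T W TT WW TW Snt])
    also have "mink Sn W = k * c + k * d" unfolding Sn_def shape_spec(2)[OF \<nu>n E1t W] hh_E1W[OF \<nu>n] c_def d_def by simp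
    also have "mink Sn T = k * b + k * c" unfolding Sn_def shape_spec(2)[OF \<nu>n E1t T] hh_E1T[OF \<nu>n] hnWT b_def by simp
    finally show ?thesis .
  qed
  have t1: "mink (shape J N Sn) E2 = (k * b + k * c) * k * a"
  proof -
    have "mink (shape J N Sn) E2 = hh N Sn E2" by (rule shape_spec(2)[OF N Snt E2t])
    also have "\<dots> = (k * b + k * c) * k * a"
      unfolding Snexp E2_def hh_TW[OF N T W] hNTT hNTW hNWT a_def[symmetric] by (simp add: algebra_simps)
    finally show ?thesis .
  qed
  have t2: "mink (shape J \<nu> SN) E2 = - (k * a) * k * b + (k * a) * k * c"
  proof -
    have "mink (shape J \<nu> SN) E2 = hh \<nu> SN E2" by (rule shape_spec(2)[OF \<nu>n SNt E2t])
    also have "\<dots> = - (k * a) * k * b + (k * a) * k * c"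
      unfolding SNexp E2_def hh_TW[OF \<nu>n T W] b_def[symmetric] c_def[symmetric] by (simp add: algebra_simps)
    finally show ?thesis .
  qed
  have "normal_curvature J Z = mink (shape J N Sn) E2 - mink (shape J \<nu> SN) E2"
    unfolding normal_curvature_def e1 e2 E1_def[symmetric] E2_def[symmetric] N_def[symmetric]
      \<nu>_def[symmetric] SN_def[symmetric] Sn_def[symmetric] mink_diff_left ..
  also have "\<dots> = 2 * (k * k) * a * b" unfolding t1 t2 by (simp add: algebra_simps)
  also have "\<dots> = a * m" using kk bm by simp
  finally show ?thesis unfolding aa m_def II_def T_def .
qed

end

lemma bb_mink: "bounded_bilinear mink"
proof
  fix a a' b b' :: "real^4" and r :: real
  show "mink (a + a') b = mink a b + mink a' b" by (rule mink_add_left)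
  show "mink a (b + b') = mink a b + mink a b'" by (rule mink_add_right)
  show "mink (r *\<^sub>R a) b = r *\<^sub>R mink a b" by (simp add: mink_scale_left)
  show "mink a (r *\<^sub>R b) = r *\<^sub>R mink a b" by (simp add: mink_scale_right)
  show "\<exists>K. \<forall>a b. norm (mink a b) \<le> norm a * norm b * K"
  proof (intro exI allI)
    fix a b :: "real^4"
    have e: "mink a b = inner a b - 2 * (a$1 * b$1)"
      unfolding mink_expand inner_vec_def sum_4 by simp
    have "\<bar>a$1 * b$1\<bar> \<le> norm a * norm b"
      unfolding abs_mult by (intro mult_mono component_le_norm_cart) auto
    moreover have "\<bar>inner a b\<bar> \<le> norm a * norm b" by (rule Cauchy_Schwarz_ineq2)
    ultimately show "norm (mink a b) \<le> norm a * norm b * 3" unfolding e real_norm_def by linarith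
  qed
qed

lemmas mink_deriv = bounded_bilinear.FDERIV[OF bb_mink]

definition phi_fun :: "real^4 \<Rightarrow> real^4 \<Rightarrow> real^4 \<Rightarrow> real" where
  "phi_fun u v Z = mink v v * (mink Z u)^2 - 2 * mink u v * mink Z u * mink Z v + mink u u * (mink Z v)^2"

definition dphi :: "real^4 \<Rightarrow> real^4 \<Rightarrow> real^4 \<Rightarrow> real^4 \<Rightarrow> real^4 \<Rightarrow> real" where
  "dphi u v du dv Z = (2 * mink v dv) * (mink Z u)^2 + mink v v * (2 * mink Z u * mink Z du)
     - 2 * ((mink du v + mink u dv) * mink Z u * mink Z v
            + mink u v * (mink Z du * mink Z v + mink Z u * mink Z dv))
     + (2 * mink u du) * (mink Z v)^2 + mink u u * (2 * mink Z v * mink Z dv)"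

lemma dphi_lin:
  "dphi u v (a *\<^sub>R x + b *\<^sub>R y) (a *\<^sub>R x' + b *\<^sub>R y') Z = a * dphi u v x x' Z + b * dphi u v y y' Z"
  unfolding dphi_def by (simp add: mink_lin algebra_simps)

lemma phi_deriv:
  fixes fu fv :: "real \<times> real \<Rightarrow> real^4"
  assumes "(fu has_derivative DU) (at p)" "(fv has_derivative DV) (at p)"
  shows "((\<lambda>q. phi_fun (fu q) (fv q) Z) has_derivative (\<lambda>h. dphi (fu p) (fv p) (DU h) (DV h) Z)) (at p)"
proof -
  have c: "((\<lambda>q. Z) has_derivative (\<lambda>h. 0)) (at p)" by simp
  note A = mink_deriv[OF assms(1) assms(1)]
  note B = mink_deriv[OF assms(1) assms(2)]
  note C = mink_deriv[OF assms(2) assms(2)]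
  note z1 = mink_deriv[OF c assms(1)]
  note z2 = mink_deriv[OF c assms(2)]
  show ?thesis
    unfolding phi_fun_def power2_eq_square
    apply (rule has_derivative_eq_rhs)
     apply (rule has_derivative_add has_derivative_diff has_derivative_mult A B C z1 z2 has_derivative_const)+
    apply (simp add: dphi_def fun_eq_iff power2_eq_square mink_sym[of "DU _" "fu p"]
        mink_sym[of "DV _" "fv p"] mink_sym[of "DU _" "fv p"] algebra_simps)
    done
qed

lemma poly_id:
  fixes A B C al be a1 a2 m1 m2 m3 m4 :: real
  shows "(2 * m4) * (al*A+be*B)^2 + C * (2 * (al*A+be*B) * a1)
     - 2 * ((m2 + m3) * (al*A+be*B) * (al*B+be*C) + B * (a1 * (al*B+be*C) + (al*A+be*B) * a2))
     + (2 * m1) * (al*B+be*C)^2 + A * (2 * (al*B+be*C) * a2)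
   = 2 * (A*C - B^2) * (al*a1 + be*a2 - al*(al*m1 + be*m2) - be*(al*m3 + be*m4))
     + (2*m1*C + A*2*m4 - 2*B*(m2+m3)) * (al*al*A + 2*al*be*B + be*be*C)"
  by (simp add: power2_eq_square algebra_simps)

lemma dir_cond:
  fixes u v du dv Z T :: "real^4"
  assumes D: "mink u u * mink v v - (mink u v)^2 \<noteq> 0"
    and T: "T = al *\<^sub>R u + be *\<^sub>R v" and TT: "mink T T = 0"
    and zu: "mink (Z - T) u = 0" and zv: "mink (Z - T) v = 0"
    and dp: "dphi u v du dv Z = 0"
  shows "mink (al *\<^sub>R du + be *\<^sub>R dv) (Z - T) = 0"
proof -
  define A where "A = mink u u"
  define B where "B = mink u v"
  define C where "C = mink v v"
  have vu: "mink v u = B" unfolding B_def by (rule mink_sym)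
  have z1: "mink Z u = al*A + be*B" using zu unfolding T A_def by (simp add: mink_lin vu)
  have z2: "mink Z v = al*B + be*C" using zv unfolding T C_def B_def by (simp add: mink_lin)
  have Q: "al*al*A + 2*al*be*B + be*be*C = 0" using TT unfolding T A_def B_def C_def
    by (simp add: mink_lin mink_sym[of v u] algebra_simps)
  have tgt: "mink (al *\<^sub>R du + be *\<^sub>R dv) (Z - T) =
     al * mink Z du + be * mink Z dv - al*(al * mink u du + be * mink du v) - be*(al * mink u dv + be * mink v dv)"
    unfolding T by (simp add: mink_lin mink_sym[of du Z] mink_sym[of dv Z] mink_sym[of du u]
        mink_sym[of dv u] mink_sym[of dv v] algebra_simps)
  have "dphi u v du dv Z = 2 * (A*C - B^2) * mink (al *\<^sub>R du + be *\<^sub>R dv) (Z - T)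
     + (2*mink u du*C + A*2*mink v dv - 2*B*(mink du v + mink u dv)) * (al*al*A + 2*al*be*B + be*be*C)"
    unfolding tgt dphi_def z1 z2 A_def[symmetric] B_def[symmetric] C_def[symmetric] by (rule poly_id)
  then have "2 * (A*C - B^2) * mink (al *\<^sub>R du + be *\<^sub>R dv) (Z - T) = 0" using dp Q by simp
  then show ?thesis using D unfolding A_def B_def C_def by simp
qed

context tj
begin

lemma phi_zero:
  assumes lT: "lightlike (ZT J Z)"
  shows "phi_fun u v Z = 0"
proof -
  define T where "T = ZT J Z"
  have Tt: "T \<in> tspace J" and N: "Z - T \<in> nspace J" unfolding T_def ZT_def using tan_spec by auto
  obtain al be where T: "T = al *\<^sub>R u + be *\<^sub>R v" using Tt tspace_iff by blast
  have TT: "mink T T = 0" using lT unfolding T_def lightlike_def by simp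
  have zu: "mink (Z - T) u = 0" and zv: "mink (Z - T) v = 0" using N unfolding nspace_def by auto
  have z1: "mink Z u = al*gA + be*gB" using zu unfolding T by (simp add: mink_lin mink_sym[of v u])
  have z2: "mink Z v = al*gB + be*gC" using zv unfolding T by (simp add: mink_lin)
  have Q: "al*al*gA + 2*al*be*gB + be*be*gC = 0" using TT unfolding T
    by (simp add: mink_lin mink_sym[of v u] algebra_simps)
  have "phi_fun u v Z = (gA*gC - gB^2) * (al*al*gA + 2*al*be*gB + be*be*gC)"
    unfolding phi_fun_def z1 z2 by (simp add: power2_eq_square algebra_simps)
  then show ?thesis using Q by simp
qed

lemma final:
  assumes lT: "lightlike (ZT J Z)" and sym: "juv J = jvu J"
    and d1: "dphi u v (juu J) (jvu J) Z = 0" and d2: "dphi u v (juv J) (jvv J) Z = 0"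
  shows "normal_curvature J Z = acoef J Z * mnorm (sff J (ZT J Z) (ZT J Z))"
proof (rule pointwise[OF lT sym])
  define T where "T = ZT J Z"
  have Tt: "T \<in> tspace J" and N: "Z - T \<in> nspace J" unfolding T_def ZT_def using tan_spec by auto
  obtain al be where T: "T = al *\<^sub>R u + be *\<^sub>R v" using Tt tspace_iff by blast
  have TT: "mink T T = 0" using lT unfolding T_def lightlike_def by simp
  have zu: "mink (Z - T) u = 0" and zv: "mink (Z - T) v = 0" using N unfolding nspace_def by auto
  have c1: "mink (al *\<^sub>R juu J + be *\<^sub>R jvu J) (Z - T) = 0"
    by (rule dir_cond[OF Dnz T TT zu zv d1])
  have c2: "mink (al *\<^sub>R juv J + be *\<^sub>R jvv J) (Z - T) = 0"
    by (rule dir_cond[OF Dnz T TT zu zv d2])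
  have NN: "ZN J Z = Z - T" unfolding ZN_def norpart_def T_def ZT_def ..
  fix Y assume Y: "Y \<in> tspace J"
  obtain c d where Yc: "Y = c *\<^sub>R u + d *\<^sub>R v" using Y tspace_iff by blast
  have "hh (Z - T) T Y = c * mink (al *\<^sub>R juu J + be *\<^sub>R jvu J) (Z - T) + d * mink (al *\<^sub>R juv J + be *\<^sub>R jvv J) (Z - T)"
    unfolding T Yc hh_formula[OF N[unfolded T]] by (simp add: mink_lin algebra_simps)
  also have "\<dots> = 0" using c1 c2 by simp
  finally show "hh (ZN J Z) (ZT J Z) Y = 0" unfolding NN T_def[symmetric] .
qed

end

theorem mainTheorem13:
  fixes f fu fv fuu fuv fvu fvv :: "real \<times> real \<Rightarrow> real^4"
    and U :: "(real \<times> real) set" and Z :: "real^4"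
  assumes "open U"
    and "\<forall>p\<in>U. (f has_derivative (\<lambda>h. fst h *\<^sub>R fu p + snd h *\<^sub>R fv p)) (at p)"
    and "\<forall>p\<in>U. (fu has_derivative (\<lambda>h. fst h *\<^sub>R fuu p + snd h *\<^sub>R fuv p)) (at p)"
    and "\<forall>p\<in>U. (fv has_derivative (\<lambda>h. fst h *\<^sub>R fvu p + snd h *\<^sub>R fvv p)) (at p)"
    and "continuous_on U fuu" and "continuous_on U fuv"
    and "continuous_on U fvu" and "continuous_on U fvv"
    and "\<forall>p\<in>U. timelike_at (jet_at fu fv fuu fuv fvu fvv p)"
    and "mink Z Z = 1"
    and "\<forall>p\<in>U. lightlike (ZT (jet_at fu fv fuu fuv fvu fvv p) Z)"
    and "\<forall>p\<in>U. sff (jet_at fu fv fuu fuv fvu fvv p)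
                 (ZT (jet_at fu fv fuu fuv fvu fvv p) Z) (ZT (jet_at fu fv fuu fuv fvu fvv p) Z) \<noteq> 0"
  shows "\<forall>p\<in>U. normal_curvature (jet_at fu fv fuu fuv fvu fvv p) Z =
           acoef (jet_at fu fv fuu fuv fvu fvv p) Z *
           mnorm (sff (jet_at fu fv fuu fuv fvu fvv p)
                   (ZT (jet_at fu fv fuu fuv fvu fvv p) Z) (ZT (jet_at fu fv fuu fuv fvu fvv p) Z))"
proof
  fix p assume p: "p \<in> U"
  note U = assms(1)
  define Jf where "Jf = jet_at fu fv fuu fuv fvu fvv"
  have tjq: "tj (Jf q)" if "q \<in> U" for q
  proof (rule tj.intro)
    show "timelike_at (Jf q)" using assms(9) that unfolding Jf_def by blast
  qed
  have jets: "ju (Jf q) = fu q" "jv (Jf q) = fv q" "juu (Jf q) = fuu q" "juv (Jf q) = fuv q"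
     "jvu (Jf q) = fvu q" "jvv (Jf q) = fvv q" for q
    unfolding Jf_def jet_at_def by simp_all
  have du: "(fu has_derivative (\<lambda>h. fst h *\<^sub>R fuu p + snd h *\<^sub>R fuv p)) (at p)" using assms(3) p by blast
  have dv: "(fv has_derivative (\<lambda>h. fst h *\<^sub>R fvu p + snd h *\<^sub>R fvv p)) (at p)" using assms(4) p by blast
  have sym: "fuv p = fvu p" by (rule clairaut[OF U p assms(2) du dv])
  have lTq: "lightlike (ZT (Jf q) Z)" if "q \<in> U" for q using assms(11) that unfolding Jf_def by simp
  have phi0: "phi_fun (fu q) (fv q) Z = 0" if "q \<in> U" for q
    using tj.phi_zero[OF tjq[OF that] lTq[OF that]] by (simp only: jets)
  have D1: "((\<lambda>q. phi_fun (fu q) (fv q) Z) has_derivative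
      (\<lambda>h. dphi (fu p) (fv p) (fst h *\<^sub>R fuu p + snd h *\<^sub>R fuv p) (fst h *\<^sub>R fvu p + snd h *\<^sub>R fvv p) Z)) (at p)"
    by (rule phi_deriv[OF du dv])
  have D0: "((\<lambda>q. phi_fun (fu q) (fv q) Z) has_derivative (\<lambda>h. 0)) (at p)"
    by (rule has_derivative_transform_within_open[OF has_derivative_const U p]) (simp add: phi0)
  have eq: "(\<lambda>h. dphi (fu p) (fv p) (fst h *\<^sub>R fuu p + snd h *\<^sub>R fuv p) (fst h *\<^sub>R fvu p + snd h *\<^sub>R fvv p) Z) = (\<lambda>h. 0)"
    by (rule has_derivative_unique[OF D1 D0])
  have d1: "dphi (fu p) (fv p) (fuu p) (fvu p) Z = 0" using fun_cong[OF eq, of "(1,0)"] by simp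
  have d2: "dphi (fu p) (fv p) (fuv p) (fvv p) Z = 0" using fun_cong[OF eq, of "(0,1)"] by simp
  show "normal_curvature (jet_at fu fv fuu fuv fvu fvv p) Z =
           acoef (jet_at fu fv fuu fuv fvu fvv p) Z *
           mnorm (sff (jet_at fu fv fuu fuv fvu fvv p)
                   (ZT (jet_at fu fv fuu fuv fvu fvv p) Z) (ZT (jet_at fu fv fuu fuv fvu fvv p) Z))"
  proof -
    have s': "juv (Jf p) = jvu (Jf p)" by (simp only: jets sym)
    have d1': "dphi (ju (Jf p)) (jv (Jf p)) (juu (Jf p)) (jvu (Jf p)) Z = 0" by (simp only: jets d1)
    have d2': "dphi (ju (Jf p)) (jv (Jf p)) (juv (Jf p)) (jvv (Jf p)) Z = 0" by (simp only: jets d2)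
    show ?thesis using tj.final[OF tjq[OF p] lTq[OF p] s' d1' d2'] unfolding Jf_def .
  qed
qed

end
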